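(* In the setting below, for each $n\in\mathbb{N}_0$ and $i,j=1,\dots,N$, $$|x_i(s)-x_j(t)|\le d(t_{2n+2})\quad\forall s,t\in[t_{2n+1},t_{2n+2}].$$
   Context: Setting: $N\ge2$; $\psi:\mathbb{R}^d\times\mathbb{R}^d\to\mathbb{R}$ positive, bounded, continuous, $K:=\|\psi\|_\infty$; $\{t_n\}_{n\in\mathbb{N}_0}$ increasing, nonnegative, $t_0=0$, $t_n\to\infty$; $\alpha(0)=1$, $\alpha=1$ on $(t_{2n},t_{2n+1})$, $\alpha=-1$ on $[t_{2n+1},t_{2n+2}]$; $\{x_i\}$ solves $x_i'(t)=\frac1{N-1}\sum_{j\ne i}\alpha(t)\psi(x_i(t),x_j(t))(x_j(t)-x_i(t))$, $t>0$, $x_i(0)=x_i^0\in\mathbb{R}^d$ (continuous, $C^1$ on each $(t_n,t_{n+1})$). $d(t):=\max_{i,j}|x_i(t)-x_j(t)|$. Standing assumptions: $t_{2n+2}-t_{2n+1}<\frac{\ln 2}{K}$ for all $n$; $\sum_{p\ge0}\ln\frac{e^{K(t_{2p+2}-t_{2p+1})}}{2-e^{K(t_{2p+2}-t_{2p+1})}}<\infty$; $\sum_{p\ge0}\ln\max\{1-e^{-K(t_{2p+1}-t_{2p})},1-\frac{\psi_0}{K}(1-e^{-K(t_{2p+1}-t_{2p})})\}=-\infty$, with $\psi_0=\min_{|y|,|z|\le M^0}\psi(y,z)$, $M^0=e^{K\sum_{p}(t_{2p+2}-t_{2p+1})}\max_i|x_i^0|$. *)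

theory Defs
  imports "HOL-Analysis.Analysis"
begin

definition diam :: "nat \<Rightarrow> (nat \<Rightarrow> real \<Rightarrow> 'a::real_normed_vector) \<Rightarrow> real \<Rightarrow> real" where
  "diam N x tau = Max {norm (x i tau - x j tau) | i j. i < N \<and> j < N}"

end

theory Submission
  imports Defs
begin

lemma vd_inner:
  assumes "(f has_vector_derivative V) F"
  shows "((\<lambda>s. w \<bullet> f s) has_real_derivative (w \<bullet> V)) F"
  using has_derivative_inner_right[OF assms[unfolded has_vector_derivative_def], of w]
  unfolding has_field_derivative_def
  by (metis (no_types, lifting) ext inner_scaleR_right mult.commute)

lemma max_principle:
  fixes g :: "nat \<Rightarrow> real \<Rightarrow> real"
  assumes ab: "a < b"
    and cont: "\<And>k. k < N \<Longrightarrow> continuous_on {a..b} (g k)"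
    and der: "\<And>s k. a < s \<Longrightarrow> s < b \<Longrightarrow> k < N \<Longrightarrow> (\<forall>j<N. g j s \<le> g k s)
               \<Longrightarrow> \<exists>D\<ge>0. (g k has_real_derivative D) (at s)"
    and cb: "\<And>j. j < N \<Longrightarrow> g j b \<le> c"
  shows "\<And>s k. s \<in> {a..b} \<Longrightarrow> k < N \<Longrightarrow> g k s \<le> c"
proof -
  have step1: "g k s < c + e * (1 + b - s)"
    if a': "a < a'" "a' \<le> b" and e: "e > 0" and s: "s \<in> {a'..b}" and k: "k < N" for a' e s k
  proof (rule ccontr)
    assume nc: "\<not> ?thesis"
    define S where "S = (\<Union>k<N. {a'..b} \<inter> (\<lambda>s. g k s - c - e * (1 + b - s)) -` {0..})"
    have cl: "closed S" unfolding S_def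
    proof (intro closed_UN ballI)
      fix k assume "k \<in> {..<N}"
      then have "continuous_on {a'..b} (g k)" using cont[of k] a' continuous_on_subset by fastforce
      then have "continuous_on {a'..b} (\<lambda>s. g k s - c - e * (1 + b - s))"
        by (intro continuous_intros)
      then show "closed ({a'..b} \<inter> (\<lambda>s. g k s - c - e * (1 + b - s)) -` {0..})"
        by (intro continuous_closed_preimage) auto
    qed auto
    have bd: "bounded S" unfolding S_def by (rule bounded_subset[of "{a'..b}"]) auto
    have "s \<in> S" using nc s k unfolding S_def by (auto intro!: bexI[of _ k])
    then have ne: "S \<noteq> {}" by auto
    obtain ss where ssS: "ss \<in> S" and ssmax: "\<forall>t\<in>S. t \<le> ss"
      using compact_attains_sup[OF compact_eq_bounded_closed[THEN iffD2, OF conjI[OF bd cl]] ne] by blast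
    from ssS obtain k0 where k0: "k0 < N" "ss \<in> {a'..b}" "g k0 ss \<ge> c + e * (1 + b - ss)"
      unfolding S_def by auto
    define m where "m = Max ((\<lambda>j. g j ss) ` {..<N})"
    have "m \<in> (\<lambda>j. g j ss) ` {..<N}" unfolding m_def using k0 by (intro Max_in) auto
    then obtain k1 where k1: "k1 < N" "g k1 ss = m" by auto
    have k1max: "\<forall>j<N. g j ss \<le> g k1 ss" unfolding k1(2) m_def by auto
    have k1ge: "g k1 ss \<ge> c + e * (1 + b - ss)" using k1max k0 by force
    have "ss \<noteq> b" using k1ge cb[OF k1(1)] e by auto
    then have ssb: "ss < b" using k0 by auto
    have ssa: "a < ss" using k0 a' by auto
    obtain D where D: "D \<ge> 0" "(g k1 has_real_derivative D) (at ss)"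
      using der[OF ssa ssb k1(1) k1max] by blast
    have "((\<lambda>s. g k1 s - c - e * (1 + b - s)) has_real_derivative (D - 0 - e * (0 + 0 - 1))) (at ss)"
      using D(2) by (auto intro!: derivative_eq_intros)
    then obtain d where d: "d > 0" "\<forall>h>0. h < d \<longrightarrow> g k1 ss - c - e * (1 + b - ss) < g k1 (ss + h) - c - e * (1 + b - (ss + h))"
      using DERIV_pos_inc_right[of _ "D + e"] D e by fastforce
    define h where "h = min (d/2) ((b - ss)/2)"
    have h: "h > 0" "h < d" "ss + h \<le> b" using d(1) ssb unfolding h_def by (auto simp: min_def field_simps)
    have "g k1 (ss + h) - c - e * (1 + b - (ss + h)) \<ge> 0" using d(2) h k1ge by force
    then have "ss + h \<in> S" unfolding S_def using k1 h k0 by auto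
    then show False using ssmax h by force
  qed
  have step2: "g k s \<le> c" if s: "a < s" "s \<le> b" and k: "k < N" for s k
  proof (rule ccontr)
    assume "\<not> ?thesis"
    define e where "e = (g k s - c) / (1 + b - s)"
    have "e > 0" using s \<open>\<not> _\<close> unfolding e_def by auto
    from step1[OF s(1) s(2) this _ k, of s] s have "g k s < c + e * (1 + b - s)" by auto
    also have "\<dots> = g k s" unfolding e_def using s by auto
    finally show False by simp
  qed
  fix s k assume s: "s \<in> {a..b}" and k: "k < N"
  show "g k s \<le> c"
  proof (cases "s = a")
    case False then show ?thesis using step2 s k by auto
  next
    case True
    have "(g k \<longlongrightarrow> g k a) (at_right a)" using continuous_on_Icc_at_rightD[OF cont[OF k] ab] .
    moreover have "\<forall>\<^sub>F y in at_right a. g k y \<le> c"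
      unfolding eventually_at_right_field using ab step2 k by (intro exI[of _ b]) auto
    ultimately have "g k a \<le> c" by (rule tendsto_upperbound) simp
    then show ?thesis using True by simp
  qed
qed
theorem lemma3p5:
  fixes N :: nat
    and psi :: "'a::euclidean_space \<Rightarrow> 'a \<Rightarrow> real"
    and K psi0 M0 :: real
    and t :: "nat \<Rightarrow> real"
    and alpha :: "real \<Rightarrow> real"
    and x :: "nat \<Rightarrow> real \<Rightarrow> 'a"
  assumes N2: "N \<ge> 2"
    and psi_pos: "\<And>y z. psi y z > 0"
    and psi_bdd: "bounded (range (\<lambda>(y, z). psi y z))"
    and psi_cont: "continuous_on UNIV (\<lambda>(y, z). psi y z)"
    and K_def: "K = (SUP p. \<bar>psi (fst p) (snd p)\<bar>)"
    and t_mono: "strict_mono t"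
    and t0: "t 0 = 0"
    and t_lim: "filterlim t at_top sequentially"
    and alpha0: "alpha 0 = 1"
    and alpha_pos: "\<And>n s. t (2*n) < s \<Longrightarrow> s < t (2*n+1) \<Longrightarrow> alpha s = 1"
    and alpha_neg: "\<And>n s. t (2*n+1) \<le> s \<Longrightarrow> s \<le> t (2*n+2) \<Longrightarrow> alpha s = -1"
    and x_cont: "\<And>i. i < N \<Longrightarrow> continuous_on {0..} (x i)"
    and x_ode: "\<And>i n s. i < N \<Longrightarrow> t n < s \<Longrightarrow> s < t (Suc n) \<Longrightarrow>
        (x i has_vector_derivative
           (1 / (real N - 1)) *\<^sub>R
             (\<Sum>j\<in>{..<N} - {i}. (alpha s * psi (x i s) (x j s)) *\<^sub>R (x j s - x i s)))
        (at s)"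
    and short_neg: "\<And>n. t (2*n+2) - t (2*n+1) < ln 2 / K"
    and sum_neg: "summable (\<lambda>p. ln (exp (K * (t (2*p+2) - t (2*p+1)))
                                   / (2 - exp (K * (t (2*p+2) - t (2*p+1))))))"
    and M0_def: "M0 = exp (K * (\<Sum>p. t (2*p+2) - t (2*p+1))) * (MAX i\<in>{..<N}. norm (x i 0))"
    and psi0_def: "psi0 = (INF p\<in>{(y, z). norm y \<le> M0 \<and> norm z \<le> M0}. psi (fst p) (snd p))"
    and sum_pos: "filterlim (\<lambda>m. \<Sum>p<m. ln (max (1 - exp (- K * (t (2*p+1) - t (2*p))))
                     (1 - psi0 / K * (1 - exp (- K * (t (2*p+1) - t (2*p)))))))
                   at_bot sequentially"
  shows "\<forall>n i j. i < N \<longrightarrow> j < N \<longrightarrow>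
           (\<forall>s\<in>{t (2*n+1)..t (2*n+2)}. \<forall>s'\<in>{t (2*n+1)..t (2*n+2)}.
              norm (x i s - x j s') \<le> diam N x (t (2*n+2)))"
  proof (intro allI impI ballI)
  fix n i j s s'
  assume i: "i < N" and j: "j < N" and s: "s \<in> {t (2*n+1)..t (2*n+2)}" and s': "s' \<in> {t (2*n+1)..t (2*n+2)}"
  define a where "a = t (2*n+1)"
  define b where "b = t (2*n+2)"
  have ab: "a < b" unfolding a_def b_def using t_mono by (simp add: strict_mono_def)
  have a0: "0 < a" unfolding a_def using strict_monoD[OF t_mono, of 0 "2*n+1"] t0 by simp
  have Npos: "real N - 1 > 0" using N2 by auto
  have bound: "\<exists>p<N. v \<bullet> x k \<sigma> \<le> v \<bullet> x p b" if k: "k < N" and sig: "\<sigma> \<in> {a..b}" for v k \<sigma>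
  proof -
    define c where "c = Max ((\<lambda>p. v \<bullet> x p b) ` {..<N})"
    have "c \<in> (\<lambda>p. v \<bullet> x p b) ` {..<N}" unfolding c_def using k by (intro Max_in) auto
    then obtain p where p: "p < N" "c = v \<bullet> x p b" by auto
    have "v \<bullet> x k \<sigma> \<le> c"
    proof (rule max_principle[where g = "\<lambda>k s. v \<bullet> x k s" and N = N, OF ab _ _ _ sig k])
      fix k assume kN: "k < N"
      have sub: "{a..b} \<subseteq> {0..}" using a0 by auto
      have "continuous_on {a..b} (x k)" using continuous_on_subset[OF x_cont[OF kN] sub] .
      then show "continuous_on {a..b} (\<lambda>s. v \<bullet> x k s)" by (intro continuous_intros)
    next
      fix j assume jN: "j < N" then show "v \<bullet> x j b \<le> c" unfolding c_def by (intro Max_ge) auto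
    next
      fix s k assume as: "a < s" "s < b" "k < N" and mx: "\<forall>j<N. v \<bullet> x j s \<le> v \<bullet> x k s"
      have al: "alpha s = -1" using alpha_neg[of n s] as unfolding a_def b_def by auto
      have "(x k has_vector_derivative
           (1 / (real N - 1)) *\<^sub>R
             (\<Sum>j\<in>{..<N} - {k}. (alpha s * psi (x k s) (x j s)) *\<^sub>R (x j s - x k s)))
        (at s)" using x_ode[of k "2*n+1" s] as unfolding a_def b_def by (simp add: numeral_2_eq_2)
      from vd_inner[OF this, of v]
      have D0: "((\<lambda>s. v \<bullet> x k s) has_real_derivative
          (1 / (real N - 1)) * (\<Sum>j\<in>{..<N} - {k}. (alpha s * psi (x k s) (x j s)) * (v \<bullet> x j s - v \<bullet> x k s))) (at s)"
        by (simp only: inner_sum_right inner_diff_right inner_scaleR_right)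
      have "(\<Sum>j\<in>{..<N} - {k}. (alpha s * psi (x k s) (x j s)) * (v \<bullet> x j s - v \<bullet> x k s))
          = (\<Sum>j\<in>{..<N} - {k}. psi (x k s) (x j s) * (v \<bullet> x k s - v \<bullet> x j s))"
        using al by (intro sum.cong refl) (simp add: right_diff_distrib)
      with D0 have D: "((\<lambda>s. v \<bullet> x k s) has_real_derivative
          (1 / (real N - 1)) * (\<Sum>j\<in>{..<N} - {k}. psi (x k s) (x j s) * (v \<bullet> x k s - v \<bullet> x j s))) (at s)"
        by simp
      have "(\<Sum>j\<in>{..<N} - {k}. psi (x k s) (x j s) * (v \<bullet> x k s - v \<bullet> x j s)) \<ge> 0"
        using mx psi_pos by (intro sum_nonneg mult_nonneg_nonneg) (auto intro: less_imp_le)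
      then have "(1 / (real N - 1)) * (\<Sum>j\<in>{..<N} - {k}. psi (x k s) (x j s) * (v \<bullet> x k s - v \<bullet> x j s)) \<ge> 0"
        using Npos by simp
      then show "\<exists>D\<ge>0. ((\<lambda>s. v \<bullet> x k s) has_real_derivative D) (at s)" using D by blast
    qed
    then show ?thesis using p by auto
  qed
  define w where "w = x i s - x j s'"
  have sab: "s \<in> {a..b}" using s unfolding a_def b_def .
  have sab': "s' \<in> {a..b}" using s' unfolding a_def b_def .
  obtain p where p: "p < N" "w \<bullet> x i s \<le> w \<bullet> x p b" using bound[OF i sab, of w] by blast
  obtain q where q: "q < N" "(-w) \<bullet> x j s' \<le> (-w) \<bullet> x q b" using bound[OF j sab', of "-w"] by blast
  have fin: "finite {norm (x i b - x j b) | i j. i < N \<and> j < N}"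
  proof -
    have "{norm (x i b - x j b) | i j. i < N \<and> j < N} \<subseteq> (\<lambda>(i, j). norm (x i b - x j b)) ` ({..<N} \<times> {..<N})"
      by auto
    then show ?thesis by (rule finite_subset) auto
  qed
  have dpq: "norm (x p b - x q b) \<le> diam N x b" unfolding diam_def
    using p(1) q(1) by (intro Max_ge[OF fin]) auto
  have "norm (x i b - x i b) \<le> diam N x b" unfolding diam_def
    using i by (intro Max_ge[OF fin]) auto
  then have dii: "0 \<le> diam N x b" by simp
  have "norm w * norm w = w \<bullet> w" using power2_norm_eq_inner[of w] by (simp only: power2_eq_square)
  also have "\<dots> = w \<bullet> (x i s - x j s')" by (simp only: w_def)
  also have "\<dots> = w \<bullet> x i s - w \<bullet> x j s'" by (rule inner_diff_right)
  also have "\<dots> \<le> w \<bullet> (x p b - x q b)" using p q by (simp add: inner_diff_right)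
  also have "\<dots> \<le> norm w * norm (x p b - x q b)" by (rule norm_cauchy_schwarz)
  also have "\<dots> \<le> norm w * diam N x b" using dpq by (simp add: mult_left_mono)
  finally have "norm w * norm w \<le> norm w * diam N x b" .
  then have "norm w \<le> diam N x b" using dii
    by (metis mult_le_cancel_left_pos norm_ge_zero order_le_less)
  then show "norm (x i s - x j s') \<le> diam N x (t (2*n+2))" unfolding w_def b_def .
qed

end
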